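(* Let $\alpha,\theta_2\in(0,\pi/2)$ satisfy $$\frac{1}{\cos\alpha}\ln\Big(\frac{1}{\sin\alpha}+\cot\alpha\Big)=(\pi-\theta_2)\cot\theta_2.$$ Then $$\frac{1}{\sin\alpha}+\frac{1}{\cot\alpha}\ln\Big(\frac{1}{\sin\alpha}+\cot\alpha\Big)\ge\frac{\pi-\theta_2}{\sin\theta_2}-\cos\theta_2.$$ *)

theory Defs
  imports Complex_Main
begin

end

theory Submission imports Defs "HOL-Analysis.Complex_Transcendental" "HOL-Library.Sum_of_Squares" begin

lemma tanh_le_self: fixes w::real assumes "0 \<le> w" shows "tanh w \<le> w"
proof -
  have "0 - tanh 0 \<le> w - tanh w"
  proof (rule DERIV_nonneg_imp_nondecreasing[OF assms, where f="\<lambda>x. x - tanh x"])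
    fix x::real assume "0 \<le> x" "x \<le> w"
    have "cosh x \<noteq> 0" by (metis cosh_real_pos less_irrefl)
    then have "DERIV (\<lambda>x. x - tanh x) x :> 1 - (1 - tanh x ^ 2)"
      by (auto intro!: derivative_eq_intros)
    then show "\<exists>y. DERIV (\<lambda>x. x - tanh x) x :> y \<and> y \<ge> 0" by force
  qed
  then show ?thesis by simp
qed

lemma cos_upper4: fixes z::real assumes "0 < z" "z < pi/2"
  shows "cos z \<le> 1 - z^2/2 + z^4/24"
proof -
  obtain t where t: "0 < t" "t < z" and e:
    "cos z = (\<Sum>m<6. cos_coeff m * z ^ m) + (cos (t + 1/2 * real 6 * pi) / fact 6) * z ^ 6"
    using Maclaurin_cos_expansion2[OF assms(1), of 6] by auto
  have c: "cos (t + 1/2 * real 6 * pi) = - cos t"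
    by (simp add: cos_add)
  have "cos t \<ge> 0" using t assms by (intro cos_ge_zero) auto
  moreover have "(\<Sum>m<6. cos_coeff m * z ^ m) = 1 - z^2/2 + z^4/24"
    by (simp add: cos_coeff_def lessThan_nat_numeral fact_numeral)
  ultimately show ?thesis using e c by (simp add: fact_numeral)
qed


lemma cos_lower6: fixes z::real assumes "0 < z" "z < pi/2"
  shows "1 - z^2/2 + z^4/24 - z^6/720 \<le> cos z"
proof -
  obtain t where t: "0 < t" "t < z" and e:
    "cos z = (\<Sum>m<8. cos_coeff m * z ^ m) + (cos (t + 1/2 * real 8 * pi) / fact 8) * z ^ 8"
    using Maclaurin_cos_expansion2[OF assms(1), of 8] by auto
  have c: "cos (t + 1/2 * real 8 * pi) = cos t"
    by (simp add: cos_add)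
  have "cos t \<ge> 0" using t assms by (intro cos_ge_zero) auto
  moreover have "(\<Sum>m<8. cos_coeff m * z ^ m) = 1 - z^2/2 + z^4/24 - z^6/720"
    by (simp add: cos_coeff_def lessThan_nat_numeral fact_numeral)
  ultimately show ?thesis using e c by (simp add: fact_numeral)
qed

lemma sin_lower3: fixes z::real assumes "0 < z" "z < pi/2"
  shows "z - z^3/6 \<le> sin z"
proof -
  obtain t where t: "0 < t" "t < z" and e:
    "sin z = (\<Sum>m<5. sin_coeff m * z ^ m) + (sin (t + 1/2 * real 5 * pi) / fact 5) * z ^ 5"
    using Maclaurin_sin_expansion3[of 5 z] assms by auto
  have c: "sin (t + 1/2 * real 5 * pi) = cos t"
  proof -
    have "t + 1/2 * real 5 * pi = (t + pi/2) + 2*pi" by simp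
    then show ?thesis by (simp only: sin_periodic) (simp add: sin_add)
  qed
  have "cos t \<ge> 0" using t assms by (intro cos_ge_zero) auto
  then have "0 \<le> cos t * z^5" using assms by simp
  moreover have "(\<Sum>m<5. sin_coeff m * z ^ m) = z - z^3/6"
    by (simp add: sin_coeff_def lessThan_nat_numeral fact_numeral)
  ultimately show ?thesis using e c by (simp add: fact_numeral)
qed


lemma pA0: fixes z::real assumes "113/100 \<le> z" "z \<le> 6/5" shows "z - z^3/6 - (31416/10000 - z) * (1 - z^2/2 + z^4/24) > 0"
proof -
  define y where "y = z - 113/100"
  have zy: "z = y + 113/100" unfolding y_def by simp
  have y0: "0 \<le> y" "y \<le> 7/100" using assms unfolding y_def by simp_all
  have h1: "0 \<le> y^1" using y0 by simp
  have h2: "y^2 \<le> 49/10000" using power_mono[OF y0(2) y0(1), of 2] by (simp add: power_divide)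
  have h3: "y^3 \<le> 343/1000000" using power_mono[OF y0(2) y0(1), of 3] by (simp add: power_divide)
  have h4: "0 \<le> y^4" using y0 by simp
  have h5: "0 \<le> y^5" using y0 by simp
  have e: "z - z^3/6 - (31416/10000 - z) * (1 - z^2/2 + z^4/24) = 51124647177/2000000000000 + 154823347973/60000000000 * y^1 + (-327261053/300000000) * y^2 + (-726293/1000000) * y^3 + 6271/60000 * y^4 + 1/24 * y^5" unfolding zy by (simp add: eval_nat_numeral field_simps)
  show ?thesis unfolding e using h1 h2 h3 h4 h5 by linarith
qed

lemma pA1: fixes z::real assumes "6/5 \<le> z" "z \<le> 13/10" shows "z - z^3/6 - (31416/10000 - z) * (1 - z^2/2 + z^4/24) > 0"
proof -
  define y where "y = z - 6/5"
  have zy: "z = y + 6/5" unfolding y_def by simp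
  have y0: "0 \<le> y" "y \<le> 1/10" using assms unfolding y_def by simp_all
  have h1: "0 \<le> y^1" using y0 by simp
  have h2: "y^2 \<le> 1/100" using power_mono[OF y0(2) y0(1), of 2] by (simp add: power_divide)
  have h3: "y^3 \<le> 1/1000" using power_mono[OF y0(2) y0(1), of 3] by (simp add: power_divide)
  have h4: "0 \<le> y^4" using y0 by simp
  have h5: "0 \<le> y^5" using y0 by simp
  have e: "z - z^3/6 - (31416/10000 - z) * (1 - z^2/2 + z^4/24) = 156717/781250 + 188839/78125 * y^1 + (-77511/62500) * y^2 + (-13031/18750) * y^3 + 1191/10000 * y^4 + 1/24 * y^5" unfolding zy by (simp add: eval_nat_numeral field_simps)
  show ?thesis unfolding e using h1 h2 h3 h4 h5 by linarith
qed

lemma pA2: fixes z::real assumes "13/10 \<le> z" "z \<le> 3927/2500" shows "z - z^3/6 - (31416/10000 - z) * (1 - z^2/2 + z^4/24) > 0"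
proof -
  define y where "y = z - 13/10"
  have zy: "z = y + 13/10" unfolding y_def by simp
  have y0: "0 \<le> y" "y \<le> 677/2500" using assms unfolding y_def by simp_all
  have h1: "0 \<le> y^1" using y0 by simp
  have h2: "y^2 \<le> 458329/6250000" using power_mono[OF y0(2) y0(1), of 2] by (simp add: power_divide)
  have h3: "y^3 \<le> 310288733/15625000000" using power_mono[OF y0(2) y0(1), of 3] by (simp add: power_divide)
  have h4: "0 \<le> y^4" using y0 by simp
  have h5: "0 \<le> y^5" using y0 by simp
  have e: "z - z^3/6 - (31416/10000 - z) * (1 - z^2/2 + z^4/24) = 21461363/50000000 + 64462549/30000000 * y^1 + (-67552/46875) * y^2 + (-32159/50000) * y^3 + 2099/15000 * y^4 + 1/24 * y^5" unfolding zy by (simp add: eval_nat_numeral field_simps)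
  show ?thesis unfolding e using h1 h2 h3 h4 h5 by linarith
qed

lemma pB0: fixes z::real assumes "0 \<le> z" "z \<le> 9/10" shows "(1 - z^2/6) * (2 - z^2/2) - (31416/10000 - z) * (z/2 - z^3/24 + z^5/720) \<ge> 0"
proof -
  define y where "y = z - 0"
  have zy: "z = y + 0" unfolding y_def by simp
  have y0: "0 \<le> y" "y \<le> 9/10" using assms unfolding y_def by simp_all
  have h1: "y^1 \<le> 9/10" using power_mono[OF y0(2) y0(1), of 1] by (simp add: power_divide)
  have h2: "y^2 \<le> 81/100" using power_mono[OF y0(2) y0(1), of 2] by (simp add: power_divide)
  have h3: "0 \<le> y^3" using y0 by simp
  have h4: "0 \<le> y^4" using y0 by simp
  have h5: "y^5 \<le> 59049/100000" using power_mono[OF y0(2) y0(1), of 5] by (simp add: power_divide)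
  have h6: "0 \<le> y^6" using y0 by simp
  have e: "(1 - z^2/6) * (2 - z^2/2) - (31416/10000 - z) * (z/2 - z^3/24 + z^5/720) = 2 + (-3927/2500) * y^1 + (-1/3) * y^2 + 1309/10000 * y^3 + 1/24 * y^4 + (-1309/300000) * y^5 + 1/720 * y^6" unfolding zy by (simp add: eval_nat_numeral field_simps)
  show ?thesis unfolding e using h1 h2 h3 h4 h5 h6 by linarith
qed

lemma pB1: fixes z::real assumes "9/10 \<le> z" "z \<le> 113/100" shows "(1 - z^2/6) * (2 - z^2/2) - (31416/10000 - z) * (z/2 - z^3/24 + z^5/720) \<ge> 0"
proof -
  define y where "y = z - 9/10"
  have zy: "z = y + 9/10" unfolding y_def by simp
  have y0: "0 \<le> y" "y \<le> 23/100" using assms unfolding y_def by simp_all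
  have h1: "y^1 \<le> 23/100" using power_mono[OF y0(2) y0(1), of 1] by (simp add: power_divide)
  have h2: "0 \<le> y^2" using y0 by simp
  have h3: "0 \<le> y^3" using y0 by simp
  have h4: "0 \<le> y^4" using y0 by simp
  have h5: "0 \<le> y^5" using y0 by simp
  have h6: "0 \<le> y^6" using y0 by simp
  have e: "(1 - z^2/6) * (2 - z^2/2) - (31416/10000 - z) * (z/2 - z^3/24 + z^5/720) = 2186026039/5000000000 + (-348121233/200000000) * y^1 + 12267403/60000000 * y^2 + 265807/1000000 * y^3 + 1459/37500 * y^4 + 941/300000 * y^5 + 1/720 * y^6" unfolding zy by (simp add: eval_nat_numeral field_simps)
  show ?thesis unfolding e using h1 h2 h3 h4 h5 h6 by linarith
qed

lemma polyA: fixes z::real assumes "z \<ge> 113/100" "z \<le> 15708/10000"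
  shows "(31416/10000 - z) * (1 - z^2/2 + z^4/24) < z - z^3/6"
proof -
  have "z - z^3/6 - (31416/10000 - z) * (1 - z^2/2 + z^4/24) > 0"
  proof (cases "z \<le> 6/5")
    case True then show ?thesis using pA0 assms by simp
  next
    case False
    show ?thesis
    proof (cases "z \<le> 13/10")
      case True then show ?thesis using pA1 False by simp
    next
      case F2: False then show ?thesis using pA2 assms by simp
    qed
  qed
  then show ?thesis by linarith
qed

lemma polyB: fixes z::real assumes "0 \<le> z" "z \<le> 113/100"
  shows "(31416/10000 - z) * (z^2/2 - z^4/24 + z^6/720) \<le> (z - z^3/6) * (2 - z^2/2)"
proof -
  have g: "(1 - z^2/6) * (2 - z^2/2) - (31416/10000 - z) * (z/2 - z^3/24 + z^5/720) \<ge> 0"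
  proof (cases "z \<le> 9/10")
    case True then show ?thesis using pB0 assms by simp
  next
    case False then show ?thesis using pB1 assms by simp
  qed
  have le: "z * ((31416/10000 - z) * (z/2 - z^3/24 + z^5/720)) \<le> z * ((1 - z^2/6) * (2 - z^2/2))"
    using g assms by (intro mult_left_mono) auto
  have e1: "z * ((31416/10000 - z) * (z/2 - z^3/24 + z^5/720)) = (31416/10000 - z) * (z^2/2 - z^4/24 + z^6/720)"
    by (simp add: eval_nat_numeral field_simps)
  have e2: "z * ((1 - z^2/6) * (2 - z^2/2)) = (z - z^3/6) * (2 - z^2/2)"
    by (simp add: eval_nat_numeral field_simps)
  show ?thesis using le unfolding e1 e2 .
qed

lemma pi_le: "pi \<le> 31416/10000" using pi_approx(2) by simp

lemma keyK: fixes z::real assumes z: "0 < z" "z < pi/2" and h: "(pi - z) * cos z \<ge> sin z"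
  shows "(pi - z) * (1 - cos z) \<le> sin z * (1 + cos z)"
proof -
  let ?P = "pi - z" and ?t = "cos z" and ?u = "sin z"
  have P0: "?P > 0" using z by simp
  have t0: "?t > 0" using z by (intro cos_gt_zero) auto
  have t1: "?t \<le> 1" by simp
  have PP: "?P \<le> 31416/10000 - z" using pi_le by simp
  have S3: "z - z^3/6 \<le> ?u" using sin_lower3[OF z] .
  show ?thesis
  proof (cases "z \<ge> 113/100")
    case True
    have zle: "z \<le> 15708/10000" using z pi_le by simp
    have Cu: "?t \<le> 1 - z^2/2 + z^4/24" using cos_upper4[OF z] .
    have "?P * ?t \<le> ?P * (1 - z^2/2 + z^4/24)" using Cu P0 by (intro mult_left_mono) auto
    also have "\<dots> \<le> (31416/10000 - z) * (1 - z^2/2 + z^4/24)"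
      using PP Cu t0 by (intro mult_right_mono) auto
    also have "\<dots> < z - z^3/6" using polyA[OF True zle] .
    also have "\<dots> \<le> ?u" using S3 .
    finally show ?thesis using h by simp
  next
    case False
    have Cl: "1 - z^2/2 + z^4/24 - z^6/720 \<le> ?t" using cos_lower6[OF z] .
    have z2': "z^2 \<le> (113/100)^2" using False z by (intro power_mono) auto
    then have z2: "z^2 \<le> 12769/10000" by (simp add: power2_eq_square)
    have "z^6/720 \<le> z^4/24"
    proof -
      have "z^6 = z^4 * z^2" by (simp add: power_add[symmetric])
      also have "\<dots> \<le> z^4 * 30" using z2 by (intro mult_left_mono) auto
      finally show ?thesis by simp
    qed
    then have Cl2: "1 - z^2/2 \<le> ?t" using Cl by simp
    have S30: "0 \<le> z - z^3/6"
    proof -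
      have "z^3 = z * z^2" by (simp add: power_add[symmetric] numeral_eq_Suc)
      also have "\<dots> \<le> z * 6" using z2 z by (intro mult_left_mono) auto
      finally show ?thesis by simp
    qed
    have "?P * (1 - ?t) \<le> (31416/10000 - z) * (1 - ?t)"
      using PP t1 by (intro mult_right_mono) auto
    also have "\<dots> \<le> (31416/10000 - z) * (z^2/2 - z^4/24 + z^6/720)"
      using Cl PP P0 by (intro mult_left_mono) auto
    also have "\<dots> \<le> (z - z^3/6) * (2 - z^2/2)" using polyB[of z] False z by simp
    also have "\<dots> \<le> ?u * (1 + ?t)"
      using S3 S30 Cl2 z2 by (intro mult_mono) auto
    finally show ?thesis .
  qed
qed


theorem lemma4p6:
  fixes \<alpha> \<theta>\<^sub>2 :: real
  assumes "0 < \<alpha>" "\<alpha> < pi / 2" "0 < \<theta>\<^sub>2" "\<theta>\<^sub>2 < pi / 2"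
    and "(1 / cos \<alpha>) * ln (1 / sin \<alpha> + cot \<alpha>) = (pi - \<theta>\<^sub>2) * cot \<theta>\<^sub>2"
  shows "1 / sin \<alpha> + (1 / cot \<alpha>) * ln (1 / sin \<alpha> + cot \<alpha>)
           \<ge> (pi - \<theta>\<^sub>2) / sin \<theta>\<^sub>2 - cos \<theta>\<^sub>2"
proof -
  define s where "s = sin \<alpha>"
  define c where "c = cos \<alpha>"
  define t where "t = cos \<theta>\<^sub>2"
  define u where "u = sin \<theta>\<^sub>2"
  define P where "P = pi - \<theta>\<^sub>2"
  define X where "X = 1 / sin \<alpha> + cot \<alpha>"
  define L where "L = ln X"
  have s0: "s > 0" unfolding s_def using assms by (intro sin_gt_zero) auto
  have c0: "c > 0" unfolding c_def using assms by (intro cos_gt_zero) auto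
  have s1: "s \<le> 1" unfolding s_def by simp
  have sc: "s^2 + c^2 = 1" unfolding s_def c_def by simp
  have u0: "u > 0" unfolding u_def using assms by (intro sin_gt_zero) auto
  have t0: "t > 0" unfolding t_def using assms by (intro cos_gt_zero) auto
  have P0: "P > 0" unfolding P_def using assms by simp
  have Xe: "X = (1 + c) / s" unfolding X_def s_def c_def cot_def by (simp add: add_divide_distrib)
  have X0: "X > 0" using Xe s0 c0 by simp
  have X1: "X \<ge> 1"
  proof -
    have "s \<le> 1 + c" using s1 c0 by simp
    then show ?thesis using Xe s0 by (simp add: le_divide_eq)
  qed
  have L0: "L \<ge> 0" unfolding L_def using X1 by simp
  have invX: "inverse X = (1 - c) / s"
  proof -
    have "s^2 = (1 - c) * (1 + c)" using sc by (simp add: algebra_simps power2_eq_square)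
    then have e: "s * s = (1 - c) * (1 + c)" by (simp add: power2_eq_square)
    have "inverse X = s / (1 + c)" using Xe by simp
    also have "\<dots> = (1 - c) / s" using s0 c0 e by (simp add: frac_eq_eq)
    finally show ?thesis .
  qed
  have La: "L \<le> c / s"
  proof -
    have "L \<le> (exp L - inverse (exp L)) / 2" using real_le_x_sinh[OF L0] .
    also have "\<dots> = (X - inverse X) / 2" unfolding L_def using X0 by simp
    also have "\<dots> = c / s" using Xe invX s0 by (simp add: field_simps)
    finally show ?thesis .
  qed
  have Lb: "c \<le> L"
  proof -
    have "tanh L = (X^2 - 1) / (X^2 + 1)" unfolding L_def using tanh_ln_real[OF X0] .
    also have "\<dots> = c"
    proof -
      have "0 < s^2" using s0 by simp
      then have "c^2 < 1" using sc by linarith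
      then have c1: "c < 1" using c0 by (simp add: abs_square_less_1)
      have "X^2 = X / inverse X" using X0 by (simp add: power2_eq_square divide_inverse)
      also have "\<dots> = ((1 + c) / s) / ((1 - c) / s)" by (simp only: invX, simp only: Xe)
      also have "\<dots> = (1 + c) / (1 - c)" using s0 by simp
      finally have "X^2 = (1 + c) / (1 - c)" .
      moreover note c1
      ultimately have e2: "X^2 - 1 = c * (X^2 + 1)" by (simp add: field_simps)
      have "X^2 + 1 > 0" by (simp add: add_nonneg_pos)
      then show ?thesis using e2 by (simp add: divide_eq_eq)
    qed
    finally show ?thesis using tanh_le_self[OF L0] by simp
  qed
  define H where "H = L / c"
  have hyp: "H = P * t / u" using assms(5) unfolding H_def L_def X_def P_def t_def u_def c_def cot_def
    by simp
  have H1: "H \<ge> 1" unfolding H_def using Lb c0 by simp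
  have sH: "s * H \<le> 1" unfolding H_def using La s0 c0 by (simp add: field_simps)
  have Ptu: "P * t \<ge> u" using H1 hyp u0 by (simp add: field_simps)
  have K: "P * (1 - t) \<le> u * (1 + t)"
    using keyK[OF assms(3,4)] Ptu unfolding P_def t_def u_def by simp
  have lhs: "1 / sin \<alpha> + (1 / cot \<alpha>) * ln (1 / sin \<alpha> + cot \<alpha>) = 1 / s + s * H"
    unfolding H_def L_def X_def s_def c_def cot_def by simp
  have rhs: "(pi - \<theta>\<^sub>2) / sin \<theta>\<^sub>2 - cos \<theta>\<^sub>2 = P / u - t"
    unfolding P_def u_def t_def by simp
  have l1: "1 / s + s * H \<ge> 1 + H"
  proof -
    have "H * (1 - s) \<le> (1 / s) * (1 - s)"
      using sH s0 s1 by (intro mult_right_mono) (auto simp: field_simps)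
    then show ?thesis using s0 by (simp add: field_simps)
  qed
  have r1: "P / u - t \<le> 1 + H"
    using K hyp u0 by (simp add: field_simps)
  show ?thesis unfolding lhs rhs using l1 r1 by linarith
qed

end
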